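(* Let $I\in\{0,1\}^{n\times m}$ be clarified. Then $\mathcal{E}(I)$ is an essential part of $I$, and it is the unique essential part of $I$: i.e. $\mathcal{E}(I)\leq I$, for every $\mathcal{F}\subseteq\mathcal{B}(I)$ the condition $\mathcal{E}(I)\leq A_{\mathcal{F}}\circ B_{\mathcal{F}}$ implies $I=A_{\mathcal{F}}\circ B_{\mathcal{F}}$, and every $J\leq I$ with this same property satisfies $\mathcal{E}(I)\leq J$.
   Context: $I\in\{0,1\}^{n\times m}$, $X=\{1,\dots,n\}$, $Y=\{1,\dots,m\}$. $I$ is clarified if it has no two identical rows and no two identical columns. For matrices, $J_1\leq J_2$ means entrywise $\leq$. For $C\subseteq X$, $D\subseteq Y$: $C^{\uparrow}=\{j\in Y\mid \forall i\in C: I_{ij}=1\}$, $D^{\downarrow}=\{i\in X\mid \forall j\in D: I_{ij}=1\}$. $\mathcal{B}(I)=\{\langle C,D\rangle\mid C^\uparrow=D, D^\downarrow=C\}$ with order $\langle C_1,D_1\rangle\leq\langle C_2,D_2\rangle$ iff $C_1\subseteq C_2$. $\gamma(i)=\langle\{i\}^{\uparrow\downarrow},\{i\}^{\uparrow}\rangle$, $\mu(j)=\langle\{j\}^{\downarrow},\{j\}^{\downarrow\uparrow}\rangle$, and $\mathcal{I}_{ij}=\{c\in\mathcal{B}(I)\mid \gamma(i)\leq c\leq\mu(j)\}$. $\mathcal{E}(I)\in\{0,1\}^{n\times m}$ is defined by $\mathcal{E}(I)_{ij}=1$ iff $\mathcal{I}_{ij}$ is non-empty and minimal w.r.t. $\subseteq$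 among the non-empty sets $\mathcal{I}_{i'j'}$ ($i'\in X$, $j'\in Y$). Boolean product: $(A\circ B)_{ij}=\max_l\min(A_{il},B_{lj})$. For $\mathcal{F}=\{\langle C_1,D_1\rangle,\dots,\langle C_p,D_p\rangle\}\subseteq\mathcal{B}(I)$, $(A_{\mathcal{F}})_{il}=1$ iff $i\in C_l$, $(B_{\mathcal{F}})_{lj}=1$ iff $j\in D_l$. A matrix $J\leq I$ is an essential part of $I$ if for every $\mathcal{F}\subseteq\mathcal{B}(I)$, $J\leq A_{\mathcal{F}}\circ B_{\mathcal{F}}$ implies $I=A_{\mathcal{F}}\circ B_{\mathcal{F}}$, and $J$ is minimal w.r.t. $\leq$ among matrices $J'\leq I$ with this property. *)

theory Defs
  imports Main
begin

text \<open>Boolean matrices of size n x m are functions nat => nat => bool,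
 with rows indexed by X = {1..n} and columns by Y = {1..m}; only entries in range matter.\<close>

type_synonym bmat = "nat \<Rightarrow> nat \<Rightarrow> bool"

definition rowsX :: "nat \<Rightarrow> nat set" where "rowsX n = {1..n}"
definition colsY :: "nat \<Rightarrow> nat set" where "colsY m = {1..m}"

definition mat_leq :: "nat \<Rightarrow> nat \<Rightarrow> bmat \<Rightarrow> bmat \<Rightarrow> bool" where
  "mat_leq n m J1 J2 \<longleftrightarrow> (\<forall>i\<in>rowsX n. \<forall>j\<in>colsY m. J1 i j \<longrightarrow> J2 i j)"

definition mat_eq :: "nat \<Rightarrow> nat \<Rightarrow> bmat \<Rightarrow> bmat \<Rightarrow> bool" where
  "mat_eq n m J1 J2 \<longleftrightarrow> (\<forall>i\<in>rowsX n. \<forall>j\<in>colsY m. J1 i j = J2 i j)"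

definition clarified :: "nat \<Rightarrow> nat \<Rightarrow> bmat \<Rightarrow> bool" where
  "clarified n m I \<longleftrightarrow>
     (\<forall>i1\<in>rowsX n. \<forall>i2\<in>rowsX n. (\<forall>j\<in>colsY m. I i1 j = I i2 j) \<longrightarrow> i1 = i2) \<and>
     (\<forall>j1\<in>colsY m. \<forall>j2\<in>colsY m. (\<forall>i\<in>rowsX n. I i j1 = I i j2) \<longrightarrow> j1 = j2)"

definition up :: "nat \<Rightarrow> nat \<Rightarrow> bmat \<Rightarrow> nat set \<Rightarrow> nat set" where
  "up n m I C = {j\<in>colsY m. \<forall>i\<in>C. I i j}"

definition down :: "nat \<Rightarrow> nat \<Rightarrow> bmat \<Rightarrow> nat set \<Rightarrow> nat set" where
  "down n m I D = {i\<in>rowsX n. \<forall>j\<in>D. I i j}"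

definition concepts :: "nat \<Rightarrow> nat \<Rightarrow> bmat \<Rightarrow> (nat set \<times> nat set) set" where
  "concepts n m I = {(C, D). C \<subseteq> rowsX n \<and> D \<subseteq> colsY m \<and> up n m I C = D \<and> down n m I D = C}"

definition concept_le :: "nat set \<times> nat set \<Rightarrow> nat set \<times> nat set \<Rightarrow> bool" where
  "concept_le c1 c2 \<longleftrightarrow> fst c1 \<subseteq> fst c2"

definition gamma :: "nat \<Rightarrow> nat \<Rightarrow> bmat \<Rightarrow> nat \<Rightarrow> nat set \<times> nat set" where
  "gamma n m I i = (down n m I (up n m I {i}), up n m I {i})"

definition mu :: "nat \<Rightarrow> nat \<Rightarrow> bmat \<Rightarrow> nat \<Rightarrow> nat set \<times> nat set" where
  "mu n m I j = (down n m I {j}, up n m I (down n m I {j}))"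

definition interval :: "nat \<Rightarrow> nat \<Rightarrow> bmat \<Rightarrow> nat \<Rightarrow> nat \<Rightarrow> (nat set \<times> nat set) set" where
  "interval n m I i j = {c\<in>concepts n m I. concept_le (gamma n m I i) c \<and> concept_le c (mu n m I j)}"

definition essE :: "nat \<Rightarrow> nat \<Rightarrow> bmat \<Rightarrow> bmat" where
  "essE n m I i j \<longleftrightarrow> i \<in> rowsX n \<and> j \<in> colsY m \<and> interval n m I i j \<noteq> {} \<and>
     (\<forall>i'\<in>rowsX n. \<forall>j'\<in>colsY m. interval n m I i' j' \<noteq> {} \<longrightarrow>
        \<not> (interval n m I i' j' \<subset> interval n m I i j))"

text \<open>Boolean product A_F o B_F for a set F of concepts, the inner index l ranging over F:
 (A_F o B_F)_ij = max_l min((A_F)_il, (B_F)_lj) with (A_F)_il = [i in C_l], (B_F)_lj = [j in D_l].\<close>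
definition AF :: "(nat set \<times> nat set) set \<Rightarrow> nat \<Rightarrow> (nat set \<times> nat set) \<Rightarrow> bool" where
  "AF F i l \<longleftrightarrow> l \<in> F \<and> i \<in> fst l"

definition BF :: "(nat set \<times> nat set) set \<Rightarrow> (nat set \<times> nat set) \<Rightarrow> nat \<Rightarrow> bool" where
  "BF F l j \<longleftrightarrow> l \<in> F \<and> j \<in> snd l"

definition bool_prod :: "(nat \<Rightarrow> 'l \<Rightarrow> bool) \<Rightarrow> 'l set \<Rightarrow> ('l \<Rightarrow> nat \<Rightarrow> bool) \<Rightarrow> bmat" where
  "bool_prod A L B i j \<longleftrightarrow> (\<exists>l\<in>L. A i l \<and> B l j)"

definition covers_if :: "nat \<Rightarrow> nat \<Rightarrow> bmat \<Rightarrow> bmat \<Rightarrow> bool" where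
  "covers_if n m I J \<longleftrightarrow> (\<forall>F. F \<subseteq> concepts n m I \<longrightarrow>
      mat_leq n m J (bool_prod (AF F) F (BF F)) \<longrightarrow> mat_eq n m I (bool_prod (AF F) F (BF F)))"

definition essential_part :: "nat \<Rightarrow> nat \<Rightarrow> bmat \<Rightarrow> bmat \<Rightarrow> bool" where
  "essential_part n m I J \<longleftrightarrow> mat_leq n m J I \<and> covers_if n m I J \<and>
     (\<forall>J'. mat_leq n m J' I \<longrightarrow> covers_if n m I J' \<longrightarrow> mat_leq n m J' J \<longrightarrow> mat_eq n m J' J)"

end

theory Submission
  imports Defs
begin

lemma up_anti: "C \<subseteq> C' \<Longrightarrow> up n m I C' \<subseteq> up n m I C"
  unfolding up_def by auto

lemma gamma_concept:
  assumes "i \<in> rowsX n" shows "gamma n m I i \<in> concepts n m I"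
proof -
  have "up n m I (down n m I (up n m I {i})) = up n m I {i}"
    using assms unfolding up_def down_def by auto
  then show ?thesis unfolding concepts_def gamma_def
    by (auto simp: up_def down_def)
qed

lemma mu_concept:
  assumes "j \<in> colsY m" shows "mu n m I j \<in> concepts n m I"
proof -
  have "down n m I (up n m I (down n m I {j})) = down n m I {j}"
    using assms unfolding up_def down_def by auto
  then show ?thesis unfolding concepts_def mu_def
    by (auto simp: up_def down_def)
qed

lemma mem_interval:
  assumes i: "i \<in> rowsX n" and j: "j \<in> colsY m"
  shows "c \<in> interval n m I i j \<longleftrightarrow> c \<in> concepts n m I \<and> i \<in> fst c \<and> j \<in> snd c"
proof (cases c)
  case (Pair C D)
  show ?thesis
  proof
    assume h: "c \<in> interval n m I i j"
    then have cc: "c \<in> concepts n m I"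
      and g: "down n m I (up n m I {i}) \<subseteq> C" and mm: "C \<subseteq> down n m I {j}"
      unfolding interval_def concept_le_def gamma_def mu_def Pair by auto
    from cc Pair have D: "D = up n m I C" and "C \<subseteq> rowsX n"
      unfolding concepts_def by auto
    have "i \<in> C" using g i by (auto simp: up_def down_def)
    moreover have "j \<in> D" using mm j D by (auto simp: up_def down_def)
    ultimately show "c \<in> concepts n m I \<and> i \<in> fst c \<and> j \<in> snd c" using cc Pair by auto
  next
    assume h: "c \<in> concepts n m I \<and> i \<in> fst c \<and> j \<in> snd c"
    then have D: "D = up n m I C" and C: "C = down n m I D" and iC: "i \<in> C" and jD: "j \<in> D"
      unfolding concepts_def Pair by auto
    have "up n m I C \<subseteq> up n m I {i}" using up_anti[of "{i}" C n m I] iC by blast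
    then have "down n m I (up n m I {i}) \<subseteq> down n m I D" using D
      unfolding down_def by auto
    then have g: "down n m I (up n m I {i}) \<subseteq> C" using C by simp
    have mm: "C \<subseteq> down n m I {j}" using C jD by (auto simp: down_def)
    show "c \<in> interval n m I i j" using h g mm Pair
      unfolding interval_def concept_le_def gamma_def mu_def by auto
  qed
qed

lemma interval_ne:
  assumes i: "i \<in> rowsX n" and j: "j \<in> colsY m"
  shows "interval n m I i j \<noteq> {} \<longleftrightarrow> I i j"
proof
  assume "interval n m I i j \<noteq> {}"
  then obtain c where "c \<in> interval n m I i j" by auto
  then have "c \<in> concepts n m I" "i \<in> fst c" "j \<in> snd c" using mem_interval[OF i j] by auto
  then show "I i j" unfolding concepts_def up_def by auto
next
  assume "I i j"
  then have "gamma n m I i \<in> interval n m I i j"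
    using mem_interval[OF i j] gamma_concept[OF i] i j
    by (auto simp: gamma_def up_def down_def)
  then show "interval n m I i j \<noteq> {}" by auto
qed

lemma finite_concepts: "finite (concepts n m I)"
proof -
  have "concepts n m I \<subseteq> Pow (rowsX n) \<times> Pow (colsY m)"
    unfolding concepts_def by auto
  moreover have "finite (Pow (rowsX n) \<times> Pow (colsY m))"
    by (simp add: rowsX_def colsY_def)
  ultimately show ?thesis by (rule finite_subset)
qed

lemma finite_interval: "finite (interval n m I i j)"
  using finite_concepts[of n m I] unfolding interval_def by auto

lemma prod_iff: "bool_prod (AF F) F (BF F) i j \<longleftrightarrow> (\<exists>c\<in>F. i \<in> fst c \<and> j \<in> snd c)"
  unfolding bool_prod_def AF_def BF_def by auto

lemma exists_ess:
  assumes i: "i \<in> rowsX n" and j: "j \<in> colsY m" and Iij: "I i j"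
  shows "\<exists>i' j'. essE n m I i' j' \<and> interval n m I i' j' \<subseteq> interval n m I i j"
proof -
  define S where "S = {p \<in> rowsX n \<times> colsY m. interval n m I (fst p) (snd p) \<noteq> {}
      \<and> interval n m I (fst p) (snd p) \<subseteq> interval n m I i j}"
  have "(i, j) \<in> S" unfolding S_def using i j Iij interval_ne[OF i j, of I] by auto
  then obtain p where pS: "p \<in> S" and pmin: "\<forall>q. q \<in> S \<longrightarrow>
     card (interval n m I (fst p) (snd p)) \<le> card (interval n m I (fst q) (snd q))"
    using ex_has_least_nat[of "\<lambda>p. p \<in> S" "(i,j)" "\<lambda>p. card (interval n m I (fst p) (snd p))"]
    by blast
  have "essE n m I (fst p) (snd p)"
    unfolding essE_def
  proof (intro conjI ballI impI)
    show "fst p \<in> rowsX n" "snd p \<in> colsY m" "interval n m I (fst p) (snd p) \<noteq> {}"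
      using pS unfolding S_def by auto
  next
    fix i' j' assume i': "i' \<in> rowsX n" and j': "j' \<in> colsY m"
      and ne: "interval n m I i' j' \<noteq> {}"
    show "\<not> interval n m I i' j' \<subset> interval n m I (fst p) (snd p)"
    proof
      assume ps: "interval n m I i' j' \<subset> interval n m I (fst p) (snd p)"
      then have "(i', j') \<in> S" using pS i' j' ne unfolding S_def by auto
      with pmin have "card (interval n m I (fst p) (snd p)) \<le> card (interval n m I i' j')" by auto
      moreover have "card (interval n m I i' j') < card (interval n m I (fst p) (snd p))"
        using ps finite_interval by (rule psubset_card_mono[rotated])
      ultimately show False by simp
    qed
  qed
  then show ?thesis using pS unfolding S_def by auto
qed

lemma ess_le: "mat_leq n m (essE n m I) I"
  unfolding mat_leq_def using interval_ne by (auto simp: essE_def)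

lemma prod_le:
  assumes "F \<subseteq> concepts n m I" "bool_prod (AF F) F (BF F) i j"
  shows "I i j"
  using assms unfolding prod_iff concepts_def up_def by auto

lemma ess_covers: "covers_if n m I (essE n m I)"
  unfolding covers_if_def
proof (intro allI impI)
  fix F assume F: "F \<subseteq> concepts n m I"
    and le: "mat_leq n m (essE n m I) (bool_prod (AF F) F (BF F))"
  show "mat_eq n m I (bool_prod (AF F) F (BF F))"
    unfolding mat_eq_def
  proof (intro ballI iffI)
    fix i j assume i: "i \<in> rowsX n" and j: "j \<in> colsY m" and Iij: "I i j"
    obtain i' j' where e: "essE n m I i' j'" and sub: "interval n m I i' j' \<subseteq> interval n m I i j"
      using exists_ess[of i n j m I] i j Iij by blast
    have i': "i' \<in> rowsX n" and j': "j' \<in> colsY m" using e by (auto simp: essE_def)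
    have "bool_prod (AF F) F (BF F) i' j'" using le e i' j' unfolding mat_leq_def by auto
    then obtain c where c: "c \<in> F" "i' \<in> fst c" "j' \<in> snd c" unfolding prod_iff by auto
    then have "c \<in> interval n m I i' j'" using F mem_interval[OF i' j'] by auto
    with sub have "c \<in> interval n m I i j" by auto
    then have "i \<in> fst c" "j \<in> snd c" using mem_interval[OF i j] by auto
    then show "bool_prod (AF F) F (BF F) i j" using c unfolding prod_iff by auto
  next
    fix i j assume "bool_prod (AF F) F (BF F) i j"
    then show "I i j" using prod_le[OF F] by auto
  qed
qed

lemma interval_eq_same:
  assumes cl: "clarified n m I"
    and i: "i \<in> rowsX n" and j: "j \<in> colsY m" and i': "i' \<in> rowsX n" and j': "j' \<in> colsY m"
    and Iij: "I i j" and eq: "interval n m I i' j' = interval n m I i j"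
  shows "i' = i \<and> j' = j"
proof -
  have Ii'j': "I i' j'"
  proof -
    have "interval n m I i j \<noteq> {}" using interval_ne[OF i j, of I] Iij by blast
    then have "interval n m I i' j' \<noteq> {}" using eq by simp
    then show ?thesis using interval_ne[OF i' j', of I] by blast
  qed
  have gi: "gamma n m I i \<in> interval n m I i j"
    using mem_interval[OF i j] gamma_concept[OF i] i j Iij
    by (auto simp: gamma_def up_def down_def)
  have gi': "gamma n m I i' \<in> interval n m I i' j'"
    using mem_interval[OF i' j'] gamma_concept[OF i'] i' j' Ii'j'
    by (auto simp: gamma_def up_def down_def)
  have mj: "mu n m I j \<in> interval n m I i j"
    using mem_interval[OF i j] mu_concept[OF j] i j Iij
    by (auto simp: mu_def up_def down_def)
  have mj': "mu n m I j' \<in> interval n m I i' j'"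
    using mem_interval[OF i' j'] mu_concept[OF j'] i' j' Ii'j'
    by (auto simp: mu_def up_def down_def)
  have "i' \<in> fst (gamma n m I i)" using gi eq mem_interval[OF i' j', of _ I] by auto
  then have r2: "\<forall>y\<in>colsY m. I i y \<longrightarrow> I i' y"
    unfolding gamma_def down_def up_def by auto
  have "i \<in> fst (gamma n m I i')" using gi' eq mem_interval[OF i j, of _ I] by auto
  then have r1: "\<forall>y\<in>colsY m. I i' y \<longrightarrow> I i y"
    unfolding gamma_def down_def up_def by auto
  have "j' \<in> snd (mu n m I j)" using mj eq mem_interval[OF i' j', of _ I] by auto
  then have c2: "\<forall>x\<in>rowsX n. I x j \<longrightarrow> I x j'"
    unfolding mu_def down_def up_def by auto
  have "j \<in> snd (mu n m I j')" using mj' eq mem_interval[OF i j, of _ I] by auto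
  then have c1: "\<forall>x\<in>rowsX n. I x j' \<longrightarrow> I x j"
    unfolding mu_def down_def up_def by auto
  have "i' = i" using cl i i' r1 r2 unfolding clarified_def by blast
  moreover have "j' = j" using cl j j' c1 c2 unfolding clarified_def by blast
  ultimately show ?thesis by simp
qed

lemma ess_least:
  assumes cl: "clarified n m I" and JI: "mat_leq n m J I" and cov: "covers_if n m I J"
  shows "mat_leq n m (essE n m I) J"
  unfolding mat_leq_def
proof (intro ballI impI)
  fix i j assume i: "i \<in> rowsX n" and j: "j \<in> colsY m" and e: "essE n m I i j"
  show "J i j"
  proof (rule ccontr)
    assume nJ: "\<not> J i j"
    have Iij: "I i j" using e ess_le[of n m I] i j unfolding mat_leq_def by auto
    define F where "F = concepts n m I - interval n m I i j"
    have F: "F \<subseteq> concepts n m I" unfolding F_def by auto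
    have "mat_leq n m J (bool_prod (AF F) F (BF F))"
      unfolding mat_leq_def
    proof (intro ballI impI)
      fix i' j' assume i': "i' \<in> rowsX n" and j': "j' \<in> colsY m" and J': "J i' j'"
      have I': "I i' j'" using JI J' i' j' unfolding mat_leq_def by auto
      have ne: "interval n m I i' j' \<noteq> {}" using interval_ne[OF i' j', of I] I' by auto
      have "\<not> interval n m I i' j' \<subseteq> interval n m I i j"
      proof
        assume sub: "interval n m I i' j' \<subseteq> interval n m I i j"
        have "\<not> interval n m I i' j' \<subset> interval n m I i j"
          using e i' j' ne unfolding essE_def by blast
        with sub have "interval n m I i' j' = interval n m I i j" by auto
        then have "i' = i \<and> j' = j" using interval_eq_same[OF cl i j i' j' Iij] by auto
        with J' nJ show False by auto
      qed
      then obtain c where c: "c \<in> interval n m I i' j'" "c \<notin> interval n m I i j" by auto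
      then have "c \<in> F" "i' \<in> fst c" "j' \<in> snd c"
        using mem_interval[OF i' j'] unfolding F_def by auto
      then show "bool_prod (AF F) F (BF F) i' j'" unfolding prod_iff by auto
    qed
    with cov F have "mat_eq n m I (bool_prod (AF F) F (BF F))"
      unfolding covers_if_def by auto
    then have "bool_prod (AF F) F (BF F) i j" using Iij i j unfolding mat_eq_def by auto
    then obtain c where "c \<in> F" "i \<in> fst c" "j \<in> snd c" unfolding prod_iff by auto
    then show False using mem_interval[OF i j] unfolding F_def by auto
  qed
qed

theorem theorem2:
  fixes n m :: nat and I :: bmat
  assumes "clarified n m I"
  shows "essential_part n m I (essE n m I)
       \<and> mat_leq n m (essE n m I) I
       \<and> covers_if n m I (essE n m I)
       \<and> (\<forall>J. mat_leq n m J I \<longrightarrow> covers_if n m I J \<longrightarrow> mat_leq n m (essE n m I) J)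
       \<and> (\<forall>J. essential_part n m I J \<longrightarrow> mat_eq n m J (essE n m I))"
proof -
  have L: "\<forall>J. mat_leq n m J I \<longrightarrow> covers_if n m I J \<longrightarrow> mat_leq n m (essE n m I) J"
    using ess_least[OF assms] by blast
  have EP: "essential_part n m I (essE n m I)"
    unfolding essential_part_def
  proof (intro conjI allI impI)
    fix J' assume "mat_leq n m J' I" "covers_if n m I J'" "mat_leq n m J' (essE n m I)"
    then show "mat_eq n m J' (essE n m I)"
      using L unfolding mat_leq_def mat_eq_def by blast
  qed (rule ess_le, rule ess_covers)
  have U: "\<forall>J. essential_part n m I J \<longrightarrow> mat_eq n m J (essE n m I)"
  proof (intro allI impI)
    fix J assume ep: "essential_part n m I J"
    then have "mat_leq n m (essE n m I) J" using L unfolding essential_part_def by blast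
    then have "mat_eq n m (essE n m I) J"
      using ep ess_le ess_covers unfolding essential_part_def by blast
    then show "mat_eq n m J (essE n m I)" unfolding mat_eq_def by auto
  qed
  show ?thesis using EP L U ess_le ess_covers by blast
qed

end
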